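(* Let $A\in\mathbb R^{n\times n}$ be tridiagonal, $n\ge2$, let $Q\in\mathbb R^{2n\times 2n}$ be the orthogonal matrix produced by Algorithm 1 (described in the context) applied to $A$, and set $Q_1=Q(1{:}n,1{:}n)$, $Q_2=Q(n{+}1{:}2n,1{:}n)$. Then for every $1\le k<n$, both $(Q_1Q_2^{T})(1{:}k,\,k{+}1{:}n)$ and $(Q_1Q_2^{T})(k{+}1{:}n,\,1{:}k)$ have rank at most $2$.
   Context: A Givens rotation on rows $p\ne q$ is an orthogonal matrix $G\in\mathbb R^{2n\times 2n}$ equal to the identity except in the entries $(p,p),(p,q),(q,p),(q,q)$, which form a $2\times2$ rotation $\begin{bmatrix}c&s\\-s&c\end{bmatrix}$, $c^2+s^2=1$. "Rotate rows $p,q$ to annihilate $R(q,j)$" means: choose such a $G$ for which $(G^{T}R)(q,j)=0$ and then update $R\leftarrow G^{T}R$, $Q\leftarrow QG$. Algorithm 1: Initialize $Q=I_{2n}$ and $R=\begin{bmatrix}A\\ I_n\end{bmatrix}\in\mathbb R^{2n\times n}$. First rotate rows $1,n+1$ to annihilate $R(n+1,1)$; then rotate rows $1,2$ to annihilate $R(2,1)$. Then for $i=2,\dots,n$: (a) rotate rows $n+1,n+i$ to annihilate $R(n+i,i)$; (b) rotate rows $i,n+1$ to annihilate $R(n+1,i)$; (c) if $i<n$, rotate rows $i,i+1$ to annihilate $R(i+1,i)$. On output $QR=\begin{bmatrix}A\\ I\end{bmatrix}$ with $R$ upper triangular. Notation $M(a{:}b,c{:}d)$ denotes the submatrix with rows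 $a,\dots,b$ and columns $c,\dots,d$. *)

theory Defs
  imports "Jordan_Normal_Form.DL_Rank_Submatrix"
begin

text \<open>All matrices are Jordan_Normal_Form matrices with 0-based indices.
  A paper index p (1-based) corresponds to index p - 1 here.\<close>

definition tridiagonal :: "real mat \<Rightarrow> bool" where
  "tridiagonal A \<longleftrightarrow> (\<forall>i<dim_row A. \<forall>j<dim_col A. (i > j + 1 \<or> j > i + 1) \<longrightarrow> A $$ (i, j) = 0)"

definition givens :: "nat \<Rightarrow> nat \<Rightarrow> nat \<Rightarrow> real \<Rightarrow> real \<Rightarrow> real mat" where
  "givens m p q c s = mat m m (\<lambda>(i, j).
      if i = p \<and> j = p then c
      else if i = p \<and> j = q then s
      else if i = q \<and> j = p then - s
      else if i = q \<and> j = q then c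
      else if i = j then 1 else 0)"

definition givens_step ::
  "nat \<Rightarrow> nat \<times> nat \<times> nat \<Rightarrow> real mat \<times> real mat \<Rightarrow> real mat \<times> real mat \<Rightarrow> bool" where
  "givens_step m st QR QR' \<longleftrightarrow> (case st of (p, q, j) \<Rightarrow>
     (\<exists>c s. c\<^sup>2 + s\<^sup>2 = 1 \<and>
        (let G = givens m p q c s in
           (transpose_mat G * snd QR) $$ (q, j) = 0 \<and>
           QR' = (fst QR * G, transpose_mat G * snd QR))))"

fun givens_run ::
  "nat \<Rightarrow> (nat \<times> nat \<times> nat) list \<Rightarrow> real mat \<times> real mat \<Rightarrow> real mat \<times> real mat \<Rightarrow> bool" where
  "givens_run m [] QR QR' \<longleftrightarrow> QR' = QR"
| "givens_run m (st # sts) QR QR' \<longleftrightarrow> (\<exists>QR1. givens_step m st QR QR1 \<and> givens_run m sts QR1 QR')"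

text \<open>Paper: (1,n+1,1), (1,2,1), then for i = 2..n:
  (n+1,n+i,i), (i,n+1,i), and (i,i+1,i) if i < n.\<close>
definition alg1_steps :: "nat \<Rightarrow> (nat \<times> nat \<times> nat) list" where
  "alg1_steps n = [(0, n, 0), (0, 1, 0)] @
     concat (map (\<lambda>i. [(n, n + i, i), (i, n, i)] @ (if i < n - 1 then [(i, i + 1, i)] else []))
                 [1..<n])"

definition alg1_Q :: "nat \<Rightarrow> real mat \<Rightarrow> real mat \<Rightarrow> bool" where
  "alg1_Q n A Q \<longleftrightarrow> (\<exists>R. givens_run (2 * n) (alg1_steps n)
       (1\<^sub>m (2 * n), mat (2 * n) n (\<lambda>(i, j). if i < n then A $$ (i, j) else if i - n = j then 1 else 0))
       (Q, R))"

end

theory Submission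
  imports Defs
begin




lemma givens_col_p:
  assumes "p < m" "q < m" "p \<noteq> q" "t < m"
  shows "givens m p q c s $$ (t, p) = (if t = p then c else 0) + (if t = q then - s else 0)"
  using assms by (auto simp: givens_def)

lemma givens_col_q:
  assumes "p < m" "q < m" "p \<noteq> q" "t < m"
  shows "givens m p q c s $$ (t, q) = (if t = p then s else 0) + (if t = q then c else 0)"
  using assms by (auto simp: givens_def)

lemma givens_col_o:
  assumes "p < m" "q < m" "j \<noteq> p" "j \<noteq> q" "t < m" "j < m"
  shows "givens m p q c s $$ (t, j) = (if t = j then 1 else 0)"
  using assms by (auto simp: givens_def)

lemma givens_dims[simp]: "dim_row (givens m p q c s) = m" "dim_col (givens m p q c s) = m"
  by (simp_all add: givens_def)

lemma givens_carrier[simp]: "givens m p q c s \<in> carrier_mat m m"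
  by (rule carrier_matI) simp_all

lemma step_entry:
  assumes Q: "Q \<in> carrier_mat m m" and pq: "p < m" "q < m" "p \<noteq> q" and ij: "i < m" "j < m"
  shows "(Q * givens m p q c s) $$ (i, j) =
    (if j = p then c * Q $$ (i, p) - s * Q $$ (i, q)
     else if j = q then s * Q $$ (i, p) + c * Q $$ (i, q) else Q $$ (i, j))"
proof -
  let ?G = "givens m p q c s"
  have e: "(Q * ?G) $$ (i, j) = (\<Sum>t\<in>{0..<m}. Q $$ (i, t) * ?G $$ (t, j))"
  proof -
    have "(Q * ?G) $$ (i, j) = row Q i \<bullet> col ?G j" using Q ij by simp
    also have "\<dots> = (\<Sum>t\<in>{0..<m}. row Q i $ t * col ?G j $ t)" by (simp add: scalar_prod_def)
    also have "\<dots> = (\<Sum>t\<in>{0..<m}. Q $$ (i, t) * ?G $$ (t, j))"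
      using Q ij by (intro sum.cong refl) simp
    finally show ?thesis .
  qed
  show ?thesis
  proof (cases "j = p")
    case True
    have "(\<Sum>t\<in>{0..<m}. Q $$ (i, t) * ?G $$ (t, j)) =
          (\<Sum>t\<in>{0..<m}. (if t = p then c * Q $$ (i, t) else 0) + (if t = q then - s * Q $$ (i, t) else 0))"
    proof (intro sum.cong refl)
      fix t assume "t \<in> {0..<m}"
      then have "?G $$ (t, j) = (if t = p then c else 0) + (if t = q then - s else 0)"
        using givens_col_p[OF pq, of t c s] True by simp
      then show "Q $$ (i, t) * ?G $$ (t, j) = (if t = p then c * Q $$ (i, t) else 0) + (if t = q then - s * Q $$ (i, t) else 0)"
        by (simp add: distrib_left)
    qed
    also have "\<dots> = c * Q $$ (i, p) - s * Q $$ (i, q)"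
      using pq by (simp add: sum.distrib)
    finally show ?thesis using e True by simp
  next
    case False
    show ?thesis
    proof (cases "j = q")
      case True
      have "(\<Sum>t\<in>{0..<m}. Q $$ (i, t) * ?G $$ (t, j)) =
          (\<Sum>t\<in>{0..<m}. (if t = p then s * Q $$ (i, t) else 0) + (if t = q then c * Q $$ (i, t) else 0))"
      proof (intro sum.cong refl)
        fix t assume "t \<in> {0..<m}"
        then have "?G $$ (t, j) = (if t = p then s else 0) + (if t = q then c else 0)"
          using givens_col_q[OF pq, of t c s] True by simp
        then show "Q $$ (i, t) * ?G $$ (t, j) = (if t = p then s * Q $$ (i, t) else 0) + (if t = q then c * Q $$ (i, t) else 0)"
          by (simp add: distrib_left)
      qed
      also have "\<dots> = s * Q $$ (i, p) + c * Q $$ (i, q)"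
        using pq by (simp add: sum.distrib)
      finally show ?thesis using e True False by simp
    next
      case F2: False
      have "(\<Sum>t\<in>{0..<m}. Q $$ (i, t) * ?G $$ (t, j)) = (\<Sum>t\<in>{0..<m}. (if t = j then Q $$ (i, t) else 0))"
      proof (intro sum.cong refl)
        fix t assume "t \<in> {0..<m}"
        then have "?G $$ (t, j) = (if t = j then 1 else 0)"
          using givens_col_o[OF pq(1,2) False F2, of t c s] ij by simp
        then show "Q $$ (i, t) * ?G $$ (t, j) = (if t = j then Q $$ (i, t) else 0)" by simp
      qed
      also have "\<dots> = Q $$ (i, j)" using ij by simp
      finally show ?thesis using e False F2 by simp
    qed
  qed
qed


lemma run_append:
  "givens_run m (xs @ ys) A C \<longleftrightarrow> (\<exists>B. givens_run m xs A B \<and> givens_run m ys B C)"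
  by (induction xs arbitrary: A) auto

definition valid_steps :: "nat \<Rightarrow> (nat \<times> nat \<times> nat) list \<Rightarrow> bool" where
  "valid_steps m sts \<longleftrightarrow> (\<forall>(p,q,j)\<in>set sts. p < m \<and> q < m \<and> p \<noteq> q)"

lemma run_inv:
  assumes "givens_run m sts (Q, R) (Q', R')" "Q \<in> carrier_mat m m" "valid_steps m sts"
    "\<forall>(p,q,j)\<in>set sts. (p \<in> S \<and> q \<in> S) \<or> (p \<notin> S \<and> q \<notin> S)"
    "\<And>x y z \<alpha> \<beta>. P x \<Longrightarrow> P y \<Longrightarrow> (\<forall>i<m. z i = \<alpha> * x i + \<beta> * y i) \<Longrightarrow> P z"
    "\<forall>c\<in>S. c < m \<longrightarrow> P (\<lambda>i. Q $$ (i, c))"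
  shows "Q' \<in> carrier_mat m m \<and> (\<forall>c\<in>S. c < m \<longrightarrow> P (\<lambda>i. Q' $$ (i, c)))"
  using assms(1-4,6)
proof (induction sts arbitrary: Q R)
  case Nil
  then show ?case by simp
next
  case (Cons st sts)
  obtain p q j where st: "st = (p, q, j)" by (cases st) auto
  from Cons.prems(1) obtain c s R1 where cs:
    "givens_run m sts (Q * givens m p q c s, R1) (Q', R')"
    by (auto simp: st givens_step_def Let_def)
  have v: "p < m" "q < m" "p \<noteq> q" using Cons.prems(3) st by (auto simp: valid_steps_def)
  have car: "Q * givens m p q c s \<in> carrier_mat m m" using Cons.prems(2) by (rule mult_carrier_mat) simp
  have "\<forall>d\<in>S. d < m \<longrightarrow> P (\<lambda>i. (Q * givens m p q c s) $$ (i, d))"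
  proof (intro ballI impI)
    fix d assume d: "d \<in> S" "d < m"
    have Pd: "P (\<lambda>i. Q $$ (i, d))" using Cons.prems(5) d by auto
    show "P (\<lambda>i. (Q * givens m p q c s) $$ (i, d))"
    proof (cases "d = p \<or> d = q")
      case True
      then have pq: "p \<in> S" "q \<in> S" using Cons.prems(4) st d by auto
      have Pp: "P (\<lambda>i. Q $$ (i, p))" "P (\<lambda>i. Q $$ (i, q))" using Cons.prems(5) pq v by auto
      show ?thesis
      proof (cases "d = p")
        case True
        show ?thesis
          by (rule assms(5)[OF Pp(1) Pp(2), of _ c "- s"])
             (use True v Cons.prems(2) in \<open>simp del: index_mult_mat add: step_entry\<close>)
      next
        case False
        with \<open>d = p \<or> d = q\<close> have "d = q" by simp
        show ?thesis
          by (rule assms(5)[OF Pp(1) Pp(2), of _ s c])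
             (use \<open>d = q\<close> v Cons.prems(2) in \<open>simp del: index_mult_mat add: step_entry\<close>)
      qed
    next
      case False
      show ?thesis
        by (rule assms(5)[OF Pd Pd, of _ 1 0])
           (use False v d Cons.prems(2) in \<open>simp del: index_mult_mat add: step_entry\<close>)
    qed
  qed
  then show ?case
    using Cons.IH[OF cs car] Cons.prems(3,4) by (auto simp: valid_steps_def)
qed

lemma run_untouched:
  assumes "givens_run m sts (Q, R) (Q', R')" "Q \<in> carrier_mat m m" "valid_steps m sts"
    "\<forall>(p,q,j)\<in>set sts. p \<noteq> d \<and> q \<noteq> d" "d < m" "i < m"
  shows "Q' $$ (i, d) = Q $$ (i, d)"
  using assms(1-4)
proof (induction sts arbitrary: Q R)
  case Nil
  then show ?case by simp
next
  case (Cons st sts)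
  obtain p q j where st: "st = (p, q, j)" by (cases st) auto
  from Cons.prems(1) obtain c s R1 where cs:
    "givens_run m sts (Q * givens m p q c s, R1) (Q', R')"
    by (auto simp: st givens_step_def Let_def)
  have v: "p < m" "q < m" "p \<noteq> q" using Cons.prems(3) st by (auto simp: valid_steps_def)
  have car: "Q * givens m p q c s \<in> carrier_mat m m" using Cons.prems(2) by (rule mult_carrier_mat) simp
  have "Q' $$ (i, d) = (Q * givens m p q c s) $$ (i, d)"
    using Cons.IH[OF cs car] Cons.prems(3,4) by (auto simp: valid_steps_def)
  also have "\<dots> = Q $$ (i, d)" using step_entry[OF Cons.prems(2) v assms(6,5)] Cons.prems(4) st by auto
  finally show ?case .
qed




lemma valid_append: "valid_steps m (xs @ ys) \<longleftrightarrow> valid_steps m xs \<and> valid_steps m ys"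
  unfolding valid_steps_def set_append ball_Un by blast

lemma zero_gen:
  assumes run: "givens_run m (pre @ suf) (1\<^sub>m m, R0) (Q, R)" and val: "valid_steps m (pre @ suf)"
    and preT: "\<forall>(p,q,j)\<in>set pre. p \<in> T \<and> q \<in> T"
    and initT: "\<forall>c\<in>T. c < m \<longrightarrow> (\<forall>j. k \<le> j \<longrightarrow> j < n \<longrightarrow> off + j \<noteq> c)"
    and sufc: "\<forall>(p,q,j)\<in>set suf. p \<noteq> c \<and> q \<noteq> c"
    and c: "c \<in> T" "c < m" and on: "off + n \<le> m"
  shows "\<forall>j. k \<le> j \<longrightarrow> j < n \<longrightarrow> Q $$ (off + j, c) = 0"
proof -
  from run obtain B where r1: "givens_run m pre (1\<^sub>m m, R0) B" and r2: "givens_run m suf B (Q, R)"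
    unfolding run_append by blast
  obtain Qm Rm where B: "B = (Qm, Rm)" by (cases B)
  have valp: "valid_steps m pre" and vals: "valid_steps m suf" using val by (simp_all add: valid_append)
  let ?P = "\<lambda>x. \<forall>j. k \<le> j \<longrightarrow> j < n \<longrightarrow> x (off + j) = (0::real)"
  have inv: "Qm \<in> carrier_mat m m \<and> (\<forall>c\<in>T. c < m \<longrightarrow> ?P (\<lambda>i. Qm $$ (i, c)))"
  proof (rule run_inv[OF r1[unfolded B]])
    show "1\<^sub>m m \<in> carrier_mat m m" by simp
    show "valid_steps m pre" by (rule valp)
    show "\<forall>(p,q,j)\<in>set pre. (p \<in> T \<and> q \<in> T) \<or> (p \<notin> T \<and> q \<notin> T)" using preT by fast
    show "?P z" if "?P x" "?P y" "\<forall>i<m. z i = \<alpha> * x i + \<beta> * y i" for x y z \<alpha> \<beta>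
    proof (intro allI impI)
      fix j assume j: "k \<le> j" "j < n"
      then have "off + j < m" using on by simp
      then show "z (off + j) = 0" using that j by simp
    qed
    show "\<forall>c\<in>T. c < m \<longrightarrow> ?P (\<lambda>i. 1\<^sub>m m $$ (i, c))"
    proof (intro ballI impI allI)
      fix c j assume h: "c \<in> T" "c < m" "k \<le> j" "j < n"
      then have "off + j < m" "off + j \<noteq> c" using on initT by auto
      then show "1\<^sub>m m $$ (off + j, c) = 0" using h by simp
    qed
  qed
  show ?thesis
  proof (intro allI impI)
    fix j assume j: "k \<le> j" "j < n"
    have ojm: "off + j < m" using j on by simp
    have car: "Qm \<in> carrier_mat m m" using inv by blast
    have "Q $$ (off + j, c) = Qm $$ (off + j, c)"
      by (rule run_untouched[OF r2[unfolded B] car vals sufc c(2) ojm])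
    also have "\<dots> = 0" using inv c j by blast
    finally show "Q $$ (off + j, c) = 0" .
  qed
qed



lemma span_gen:
  assumes run: "givens_run m (pre @ suf) (1\<^sub>m m, R0) (Q, R)" and val: "valid_steps m (pre @ suf)"
    and d: "da \<in> S" "db \<in> S" "da < m" "db < m"
    and others: "\<forall>c\<in>S. c < m \<longrightarrow> c \<noteq> da \<longrightarrow> c \<noteq> db \<longrightarrow>
        (\<forall>(p,q,j)\<in>set pre. p \<noteq> c \<and> q \<noteq> c) \<and> (\<forall>j<k. off + j \<noteq> c)"
    and sufS: "\<forall>(p,q,j)\<in>set suf. p \<in> S \<and> q \<in> S"
    and ok: "off + k \<le> m"
  shows "\<exists>a b. \<forall>c\<in>S. c < m \<longrightarrow> (\<exists>\<alpha> \<beta>. \<forall>j<k. Q $$ (off + j, c) = \<alpha> * a j + \<beta> * b j)"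
proof -
  from run obtain B where r1: "givens_run m pre (1\<^sub>m m, R0) B" and r2: "givens_run m suf B (Q, R)"
    unfolding run_append by blast
  obtain Qm Rm where B: "B = (Qm, Rm)" by (cases B)
  have valp: "valid_steps m pre" and vals: "valid_steps m suf" using val by (simp_all add: valid_append)
  have car: "Qm \<in> carrier_mat m m"
    using run_inv[OF r1[unfolded B] _ valp, of "{}" "\<lambda>_. True"] by simp
  define a where "a = (\<lambda>j. Qm $$ (off + j, da))"
  define b where "b = (\<lambda>j. Qm $$ (off + j, db))"
  let ?P = "\<lambda>x. \<exists>\<alpha> \<beta>. \<forall>j<k. x (off + j) = \<alpha> * a j + \<beta> * b j"
  have inv: "Q \<in> carrier_mat m m \<and> (\<forall>c\<in>S. c < m \<longrightarrow> ?P (\<lambda>i. Q $$ (i, c)))"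
  proof (rule run_inv[OF r2[unfolded B] car])
    show "valid_steps m suf" by (rule vals)
    show "\<forall>(p,q,j)\<in>set suf. (p \<in> S \<and> q \<in> S) \<or> (p \<notin> S \<and> q \<notin> S)" using sufS by fast
    show "?P z" if "?P x" "?P y" "\<forall>i<m. z i = \<alpha> * x i + \<beta> * y i" for x y z \<alpha> \<beta>
    proof -
      from that(1) obtain a1 b1 where 1: "\<forall>j<k. x (off + j) = a1 * a j + b1 * b j" by blast
      from that(2) obtain a2 b2 where 2: "\<forall>j<k. y (off + j) = a2 * a j + b2 * b j" by blast
      show ?thesis
      proof (intro exI allI impI)
        fix j assume "j < k"
        then have "off + j < m" using ok by simp
        then show "z (off + j) = (\<alpha> * a1 + \<beta> * a2) * a j + (\<alpha> * b1 + \<beta> * b2) * b j"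
          using that(3) 1 2 \<open>j < k\<close> by (simp add: algebra_simps)
      qed
    qed
    show "\<forall>c\<in>S. c < m \<longrightarrow> ?P (\<lambda>i. Qm $$ (i, c))"
    proof (intro ballI impI)
      fix c assume c: "c \<in> S" "c < m"
      show "?P (\<lambda>i. Qm $$ (i, c))"
      proof (cases "c = da")
        case True
        then show ?thesis by (intro exI[of _ 1] exI[of _ 0]) (simp add: a_def)
      next
        case F1: False
        show ?thesis
        proof (cases "c = db")
          case True
          then show ?thesis by (intro exI[of _ 0] exI[of _ 1]) (simp add: b_def)
        next
          case False
          have "\<forall>j<k. Qm $$ (off + j, c) = 0"
          proof (intro allI impI)
            fix j assume "j < k"
            have oth: "\<forall>(p,q,j)\<in>set pre. p \<noteq> c \<and> q \<noteq> c" "off + j \<noteq> c"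
              using others c F1 False \<open>j < k\<close> by blast+
            have ojm: "off + j < m" using \<open>j < k\<close> ok by simp
            have "Qm $$ (off + j, c) = 1\<^sub>m m $$ (off + j, c)"
              by (rule run_untouched[OF r1[unfolded B] _ valp oth(1) c(2) ojm]) simp
            also have "\<dots> = 0" using oth(2) ojm c(2) by simp
            finally show "Qm $$ (off + j, c) = 0" .
          qed
          then show ?thesis by (intro exI[of _ 0] exI[of _ 0]) simp
        qed
      qed
    qed
  qed
  then show ?thesis by blast
qed




definition sf :: "nat \<Rightarrow> nat \<Rightarrow> (nat \<times> nat \<times> nat) list" where
  "sf n i = [(n, n + i, i), (i, n, i)] @ (if i < n - 1 then [(i, i + 1, i)] else [])"

lemma alg1_sf: "alg1_steps n = [(0,n,0),(0,1,0)] @ concat (map (sf n) [1..<n])"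
  unfolding alg1_steps_def sf_def[abs_def] by simp

lemma upt_split: "a \<le> b \<Longrightarrow> b \<le> c \<Longrightarrow> [a..<c] = [a..<b] @ [b..<c]"
  by (metis le_add_diff_inverse upt_add_eq_append)

lemma set_sf: "(p, q, j) \<in> set (sf n i) \<longleftrightarrow>
   (p = n \<and> q = n + i \<and> j = i) \<or> (p = i \<and> q = n \<and> j = i) \<or> (i < n - 1 \<and> p = i \<and> q = i + 1 \<and> j = i)"
  by (auto simp: sf_def)

lemma alg1_valid: "2 \<le> n \<Longrightarrow> valid_steps (2 * n) (alg1_steps n)"
  unfolding valid_steps_def alg1_sf by (auto simp: set_sf)

lemma F1:
  assumes run: "givens_run (2*n) (alg1_steps n) (1\<^sub>m (2*n), R0) (Q, R)" and n: "2 \<le> n"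
    and k: "1 \<le> k" "k < n" and c: "c < k"
  shows "\<forall>j. k \<le> j \<longrightarrow> j < n \<longrightarrow> Q $$ (n + j, c) = 0"
proof -
  have eq: "alg1_steps n = ([(0,n,0),(0,1,0)] @ concat (map (sf n) [1..<k])) @ concat (map (sf n) [k..<n])"
  proof -
    have u: "[1..<n] = [1..<k] @ [k..<n]" by (rule upt_split) (use k in auto)
    show ?thesis unfolding alg1_sf u by simp
  qed
  show ?thesis
  proof (rule zero_gen[OF run[unfolded eq], where T = "{c. c \<le> k \<or> (n \<le> c \<and> c < n + k)}"])
    show "valid_steps (2 * n) (([(0,n,0),(0,1,0)] @ concat (map (sf n) [1..<k])) @ concat (map (sf n) [k..<n]))"
      using alg1_valid[OF n] eq by simp
    show "\<forall>(p,q,j)\<in>set ([(0,n,0),(0,1,0)] @ concat (map (sf n) [1..<k])).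
        p \<in> {c. c \<le> k \<or> (n \<le> c \<and> c < n + k)} \<and> q \<in> {c. c \<le> k \<or> (n \<le> c \<and> c < n + k)}"
      using k by (auto simp: set_sf)
    show "\<forall>c\<in>{c. c \<le> k \<or> (n \<le> c \<and> c < n + k)}. c < 2 * n \<longrightarrow> (\<forall>j. k \<le> j \<longrightarrow> j < n \<longrightarrow> n + j \<noteq> c)"
      using k by auto
    show "\<forall>(p,q,j)\<in>set (concat (map (sf n) [k..<n])). p \<noteq> c \<and> q \<noteq> c"
      using k c by (auto simp: set_sf)
  qed (use k c in auto)
qed

lemma F3:
  assumes run: "givens_run (2*n) (alg1_steps n) (1\<^sub>m (2*n), R0) (Q, R)" and n: "2 \<le> n"
    and k: "1 \<le> k" "k < n" and c: "c + 1 < k"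
  shows "\<forall>i. k \<le> i \<longrightarrow> i < n \<longrightarrow> Q $$ (0 + i, c) = 0"
proof -
  have eq: "alg1_steps n = ([(0,n,0),(0,1,0)] @ concat (map (sf n) [1..<k-1])) @ concat (map (sf n) [k-1..<n])"
  proof -
    have u: "[1..<n] = [1..<k-1] @ [k-1..<n]" by (rule upt_split) (use k c in auto)
    show ?thesis unfolding alg1_sf u by simp
  qed
  show ?thesis
  proof (rule zero_gen[OF run[unfolded eq], where T = "{c. c < k \<or> n \<le> c}"])
    show "valid_steps (2 * n) (([(0,n,0),(0,1,0)] @ concat (map (sf n) [1..<k-1])) @ concat (map (sf n) [k-1..<n]))"
      using alg1_valid[OF n] eq by simp
    show "\<forall>(p,q,j)\<in>set ([(0,n,0),(0,1,0)] @ concat (map (sf n) [1..<k-1])).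
        p \<in> {c. c < k \<or> n \<le> c} \<and> q \<in> {c. c < k \<or> n \<le> c}"
      using k c by (auto simp: set_sf)
    show "\<forall>c\<in>{c. c < k \<or> n \<le> c}. c < 2 * n \<longrightarrow> (\<forall>j. k \<le> j \<longrightarrow> j < n \<longrightarrow> 0 + j \<noteq> c)"
      using k by auto
    show "\<forall>(p,q,j)\<in>set (concat (map (sf n) [k-1..<n])). p \<noteq> c \<and> q \<noteq> c"
      using k c by (auto simp: set_sf)
  qed (use k c in auto)
qed

lemma F2:
  assumes run: "givens_run (2*n) (alg1_steps n) (1\<^sub>m (2*n), R0) (Q, R)" and n: "2 \<le> n"
    and k: "1 \<le> k" "k < n"
  shows "\<exists>a b. \<forall>c. k \<le> c \<longrightarrow> c < n \<longrightarrow> (\<exists>\<alpha> \<beta>. \<forall>j<k. Q $$ (0 + j, c) = \<alpha> * a j + \<beta> * b j)"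
proof -
  let ?pre = "[(0,n,0),(0,1,0)] @ concat (map (sf n) [1..<k]) @ [(n,n+k,k),(k,n,k)]"
  let ?suf = "(if k < n - 1 then [(k,k+1,k)] else []) @ concat (map (sf n) [Suc k..<n])"
  let ?S = "{c. (k \<le> c \<and> c \<le> n) \<or> n + k < c}"
  have u: "[1..<n] = [1..<k] @ k # [Suc k..<n]"
  proof -
    have "[1..<n] = [1..<k] @ [k..<n]" by (rule upt_split) (use k in auto)
    moreover have "[k..<n] = k # [Suc k..<n]" by (rule upt_conv_Cons) (use k in auto)
    ultimately show ?thesis by simp
  qed
  have eq: "alg1_steps n = ?pre @ ?suf"
    unfolding alg1_sf u by (simp add: sf_def)
  have "\<exists>a b. \<forall>c\<in>?S. c < 2 * n \<longrightarrow> (\<exists>\<alpha> \<beta>. \<forall>j<k. Q $$ (0 + j, c) = \<alpha> * a j + \<beta> * b j)"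
  proof (rule span_gen[OF run[unfolded eq], where da = k and db = n])
    show "valid_steps (2 * n) (?pre @ ?suf)" using alg1_valid[OF n] eq by simp
    show "\<forall>c\<in>?S. c < 2 * n \<longrightarrow> c \<noteq> k \<longrightarrow> c \<noteq> n \<longrightarrow>
        (\<forall>(p,q,j)\<in>set ?pre. p \<noteq> c \<and> q \<noteq> c) \<and> (\<forall>j<k. 0 + j \<noteq> c)"
      using k by (auto simp: set_sf)
    show "\<forall>(p,q,j)\<in>set ?suf. p \<in> ?S \<and> q \<in> ?S"
      using k by (auto simp: set_sf)
  qed (use k in auto)
  then show ?thesis using k by (metis (no_types, lifting) mem_Collect_eq less_imp_le_nat trans_less_add1 mult_2)
qed

lemma F4:
  assumes run: "givens_run (2*n) (alg1_steps n) (1\<^sub>m (2*n), R0) (Q, R)" and n: "2 \<le> n"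
    and k: "1 \<le> k" "k < n"
  shows "\<exists>a b. \<forall>c. k - 1 \<le> c \<longrightarrow> c < n \<longrightarrow> (\<exists>\<alpha> \<beta>. \<forall>j<k. Q $$ (n + j, c) = \<alpha> * a j + \<beta> * b j)"
proof -
  let ?suf = "[(k-1,k,k-1)] @ concat (map (sf n) [k..<n])"
  let ?S = "{c. (k - 1 \<le> c \<and> c \<le> n) \<or> n + k \<le> c}"
  obtain pre where eq: "alg1_steps n = pre @ ?suf"
    and preS: "\<forall>(p,q,j)\<in>set pre. (p \<le> k - 1 \<or> (n \<le> p \<and> p < n + k)) \<and> (q \<le> k - 1 \<or> (n \<le> q \<and> q < n + k))"
  proof (cases "k = 1")
    case True
    show ?thesis
      by (rule that[of "[(0,n,0)]"]) (use True in \<open>auto simp: alg1_sf\<close>)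
  next
    case False
    have u: "[1..<n] = [1..<k-1] @ (k-1) # [k..<n]"
    proof -
      have "[1..<n] = [1..<k-1] @ [k-1..<n]" by (rule upt_split) (use k False in auto)
      moreover have "[k-1..<n] = (k-1) # [Suc (k-1)..<n]" by (rule upt_conv_Cons) (use k in auto)
      moreover have "Suc (k-1) = k" using k by simp
      ultimately show ?thesis by simp
    qed
    have sfk: "sf n (k-1) = [(n, n + (k-1), k-1), (k-1, n, k-1), (k-1, k, k-1)]"
      using k False by (simp add: sf_def)
    have e1: "alg1_steps n = [(0,n,0),(0,1,0)] @ concat (map (sf n) [1..<k-1]) @ sf n (k-1) @ concat (map (sf n) [k..<n])"
      unfolding alg1_sf u by simp
    show ?thesis
    proof (rule that[of "[(0,n,0),(0,1,0)] @ concat (map (sf n) [1..<k-1]) @ [(n, n + (k-1), k-1), (k-1, n, k-1)]"])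
      show "alg1_steps n = ([(0,n,0),(0,1,0)] @ concat (map (sf n) [1..<k-1]) @ [(n, n + (k-1), k-1), (k-1, n, k-1)]) @ ?suf"
        unfolding e1 sfk by simp
    qed (use k False in \<open>auto simp: set_sf\<close>)
  qed
  have "\<exists>a b. \<forall>c\<in>?S. c < 2 * n \<longrightarrow> (\<exists>\<alpha> \<beta>. \<forall>j<k. Q $$ (n + j, c) = \<alpha> * a j + \<beta> * b j)"
  proof (rule span_gen[OF run[unfolded eq], where da = "k-1" and db = n])
    show "valid_steps (2 * n) (pre @ ?suf)" using alg1_valid[OF n] eq by simp
    show "\<forall>c\<in>?S. c < 2 * n \<longrightarrow> c \<noteq> k - 1 \<longrightarrow> c \<noteq> n \<longrightarrow>
        (\<forall>(p,q,j)\<in>set pre. p \<noteq> c \<and> q \<noteq> c) \<and> (\<forall>j<k. n + j \<noteq> c)"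
    proof (intro ballI impI)
      fix c assume c: "c \<in> ?S" "c < 2 * n" "c \<noteq> k - 1" "c \<noteq> n"
      then have c': "(k \<le> c \<and> c < n) \<or> n + k \<le> c" by auto
      have pc: "p \<noteq> c \<and> q \<noteq> c" if "(p, q, j) \<in> set pre" for p q j
      proof -
        have "(p \<le> k - 1 \<or> (n \<le> p \<and> p < n + k)) \<and> (q \<le> k - 1 \<or> (n \<le> q \<and> q < n + k))"
          using preS that by blast
        then show ?thesis using c' k by linarith
      qed
      then have A: "\<forall>(p,q,j)\<in>set pre. p \<noteq> c \<and> q \<noteq> c" by blast
      have B: "\<forall>j<k. n + j \<noteq> c" using c' by auto
      show "(\<forall>(p,q,j)\<in>set pre. p \<noteq> c \<and> q \<noteq> c) \<and> (\<forall>j<k. n + j \<noteq> c)" using A B by blast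
    qed
    show "\<forall>(p,q,j)\<in>set ?suf. p \<in> ?S \<and> q \<in> ?S"
      using k by (auto simp: set_sf)
  qed (use k in auto)
  then obtain a b where H: "\<forall>c\<in>?S. c < 2 * n \<longrightarrow> (\<exists>\<alpha> \<beta>. \<forall>j<k. Q $$ (n + j, c) = \<alpha> * a j + \<beta> * b j)"
    by blast
  show ?thesis
  proof (rule exI[of _ a], rule exI[of _ b], intro allI impI)
    fix c assume "k - 1 \<le> c" "c < n"
    then have "c \<in> ?S" "c < 2 * n" by auto
    then show "\<exists>\<alpha> \<beta>. \<forall>j<k. Q $$ (n + j, c) = \<alpha> * a j + \<beta> * b j" using H by blast
  qed
qed





lemma rank_le_2:
  fixes B :: "real mat"
  assumes B: "B \<in> carrier_mat r c"
    and e: "\<And>i j. i < r \<Longrightarrow> j < c \<Longrightarrow> B $$ (i, j) = fa i * ga j + fb i * gb j"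
  shows "vec_space.rank r B \<le> 2"
proof -
  let ?B1 = "mat r c (\<lambda>(i, j). fa i * ga j)"
  let ?B2 = "mat r c (\<lambda>(i, j). fb i * gb j)"
  have eq: "B = ?B1 + ?B2"
    by (rule eq_matI) (use B e in auto)
  have "vec_space.rank r (?B1 + ?B2) \<le> vec_space.rank r ?B1 + vec_space.rank r ?B2"
    by (rule vec_space.rank_subadditive) auto
  moreover have "vec_space.rank r ?B1 \<le> 1"
    by (rule vec_space.rank_le_1_product_entries[of _ _ c]) auto
  moreover have "vec_space.rank r ?B2 \<le> 1"
    by (rule vec_space.rank_le_1_product_entries[of _ _ c]) auto
  ultimately show ?thesis using eq by simp
qed

lemma pick_interval: "a + j < b \<Longrightarrow> pick {a..<b} j = a + j"
proof (induction j)
  case 0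
  then show ?case by (auto intro!: Least_equality)
next
  case (Suc j)
  then have "pick {a..<b} j = a + j" by simp
  then show ?case using Suc.prems by (auto intro!: Least_equality)
qed

lemma pick_lessThan: "j < k \<Longrightarrow> pick {..<k} j = j"
  using pick_interval[of 0 j k] by (simp add: lessThan_atLeast0)




theorem theorem4p2:
  fixes n :: nat and A Q :: "real mat"
  assumes "n \<ge> 2"
    and "A \<in> carrier_mat n n"
    and "tridiagonal A"
    and "alg1_Q n A Q"
  shows "\<forall>k. 1 \<le> k \<and> k < n \<longrightarrow>
    (let Q1 = mat n n (\<lambda>(i, j). Q $$ (i, j));
         Q2 = mat n n (\<lambda>(i, j). Q $$ (n + i, j));
         M = Q1 * transpose_mat Q2
     in vec_space.rank k (submatrix M {..<k} {k..<n}) \<le> 2 \<and>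
        vec_space.rank (n - k) (submatrix M {k..<n} {..<k}) \<le> 2)"
proof (intro allI impI)
  fix k assume kk: "1 \<le> k \<and> k < n"
  then have k: "1 \<le> k" "k < n" by auto
  have n: "2 \<le> n" by (rule assms(1))
  from assms(4) obtain R R0 where run: "givens_run (2*n) (alg1_steps n) (1\<^sub>m (2*n), R0) (Q, R)"
    unfolding alg1_Q_def by blast
  define Q1 where "Q1 = mat n n (\<lambda>(i, j). Q $$ (i, j))"
  define Q2 where "Q2 = mat n n (\<lambda>(i, j). Q $$ (n + i, j))"
  define M where "M = Q1 * transpose_mat Q2"
  have Mcar: "M \<in> carrier_mat n n" unfolding M_def Q1_def Q2_def by (intro carrier_matI) simp_all
  have Ment: "M $$ (i, j) = (\<Sum>c<n. Q $$ (i, c) * Q $$ (n + j, c))" if "i < n" "j < n" for i j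
    using that unfolding M_def Q1_def Q2_def
    by (simp add: scalar_prod_def lessThan_atLeast0)
  from F2[OF run n k] obtain a b where
    ab: "\<forall>c. k \<le> c \<longrightarrow> c < n \<longrightarrow> (\<exists>\<alpha> \<beta>. \<forall>j<k. Q $$ (0 + j, c) = \<alpha> * a j + \<beta> * b j)"
    by blast
  have "\<forall>c. \<exists>\<alpha> \<beta>. k \<le> c \<longrightarrow> c < n \<longrightarrow> (\<forall>j<k. Q $$ (j, c) = \<alpha> * a j + \<beta> * b j)"
    using ab by simp
  then obtain al be where albe:
    "\<forall>c. k \<le> c \<longrightarrow> c < n \<longrightarrow> (\<forall>j<k. Q $$ (j, c) = al c * a j + be c * b j)"
    by metis
  have B1: "vec_space.rank k (submatrix M {..<k} {k..<n}) \<le> 2"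
  proof (rule rank_le_2[where fa = a and fb = b
        and ga = "\<lambda>j. \<Sum>c\<in>{k..<n}. al c * Q $$ (n + (k + j), c)"
        and gb = "\<lambda>j. \<Sum>c\<in>{k..<n}. be c * Q $$ (n + (k + j), c)"])
    have c1: "card {i. i < dim_row M \<and> i \<in> {..<k}} = k"
    proof -
      have "{i. i < dim_row M \<and> i \<in> {..<k}} = {..<k}" using Mcar k by auto
      then show ?thesis by simp
    qed
    have c2: "card {j. j < dim_col M \<and> j \<in> {k..<n}} = n - k"
    proof -
      have "{j. j < dim_col M \<and> j \<in> {k..<n}} = {k..<n}" using Mcar k by auto
      then show ?thesis by simp
    qed
    show "submatrix M {..<k} {k..<n} \<in> carrier_mat k (n - k)"
      using c1 c2 by (intro carrier_matI) (simp_all add: dim_submatrix)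
    fix i j assume ij: "i < k" "j < n - k"
    have "submatrix M {..<k} {k..<n} $$ (i, j) = M $$ (i, k + j)"
      using ij c1 c2 by (simp add: submatrix_index pick_lessThan pick_interval)
    also have "\<dots> = (\<Sum>c<n. Q $$ (i, c) * Q $$ (n + (k + j), c))"
      using ij k by (simp add: Ment)
    also have "\<dots> = (\<Sum>c\<in>{k..<n}. Q $$ (i, c) * Q $$ (n + (k + j), c))"
    proof (rule sum.mono_neutral_right)
      show "\<forall>c\<in>{..<n} - {k..<n}. Q $$ (i, c) * Q $$ (n + (k + j), c) = 0"
        using F1[OF run n k] ij by auto
    qed auto
    also have "\<dots> = (\<Sum>c\<in>{k..<n}. (al c * a i + be c * b i) * Q $$ (n + (k + j), c))"
      using albe ij by (intro sum.cong) auto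
    also have "\<dots> = a i * (\<Sum>c\<in>{k..<n}. al c * Q $$ (n + (k + j), c))
                  + b i * (\<Sum>c\<in>{k..<n}. be c * Q $$ (n + (k + j), c))"
      by (simp add: sum_distrib_left sum.distrib algebra_simps)
    finally show "submatrix M {..<k} {k..<n} $$ (i, j) = a i * (\<Sum>c\<in>{k..<n}. al c * Q $$ (n + (k + j), c))
                  + b i * (\<Sum>c\<in>{k..<n}. be c * Q $$ (n + (k + j), c))" .
  qed
  from F4[OF run n k] obtain a' b' where
    ab': "\<forall>c. k - 1 \<le> c \<longrightarrow> c < n \<longrightarrow> (\<exists>\<alpha> \<beta>. \<forall>j<k. Q $$ (n + j, c) = \<alpha> * a' j + \<beta> * b' j)"
    by blast
  have "\<forall>c. \<exists>\<alpha> \<beta>. k - 1 \<le> c \<longrightarrow> c < n \<longrightarrow> (\<forall>j<k. Q $$ (n + j, c) = \<alpha> * a' j + \<beta> * b' j)"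
    using ab' by simp
  then obtain al' be' where albe':
    "\<forall>c. k - 1 \<le> c \<longrightarrow> c < n \<longrightarrow> (\<forall>j<k. Q $$ (n + j, c) = al' c * a' j + be' c * b' j)"
    by metis
  have B2: "vec_space.rank (n - k) (submatrix M {k..<n} {..<k}) \<le> 2"
  proof (rule rank_le_2[where ga = a' and gb = b'
        and fa = "\<lambda>i. \<Sum>c\<in>{k-1..<n}. Q $$ (k + i, c) * al' c"
        and fb = "\<lambda>i. \<Sum>c\<in>{k-1..<n}. Q $$ (k + i, c) * be' c"])
    have c1: "card {i. i < dim_col M \<and> i \<in> {..<k}} = k"
    proof -
      have "{i. i < dim_col M \<and> i \<in> {..<k}} = {..<k}" using Mcar k by auto
      then show ?thesis by simp
    qed
    have c2: "card {j. j < dim_row M \<and> j \<in> {k..<n}} = n - k"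
    proof -
      have "{j. j < dim_row M \<and> j \<in> {k..<n}} = {k..<n}" using Mcar k by auto
      then show ?thesis by simp
    qed
    show "submatrix M {k..<n} {..<k} \<in> carrier_mat (n - k) k"
      using c1 c2 by (intro carrier_matI) (simp_all add: dim_submatrix)
    fix i j assume ij: "i < n - k" "j < k"
    have "submatrix M {k..<n} {..<k} $$ (i, j) = M $$ (k + i, j)"
      using ij c1 c2 by (simp add: submatrix_index pick_lessThan pick_interval)
    also have "\<dots> = (\<Sum>c<n. Q $$ (k + i, c) * Q $$ (n + j, c))"
      using ij k by (simp add: Ment)
    also have "\<dots> = (\<Sum>c\<in>{k-1..<n}. Q $$ (k + i, c) * Q $$ (n + j, c))"
    proof (rule sum.mono_neutral_right)
      show "\<forall>c\<in>{..<n} - {k-1..<n}. Q $$ (k + i, c) * Q $$ (n + j, c) = 0"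
      proof
        fix c assume "c \<in> {..<n} - {k-1..<n}"
        then have "c + 1 < k" by auto
        then have "Q $$ (0 + (k + i), c) = 0" using F3[OF run n k] ij by auto
        then show "Q $$ (k + i, c) * Q $$ (n + j, c) = 0" by simp
      qed
    qed auto
    also have "\<dots> = (\<Sum>c\<in>{k-1..<n}. Q $$ (k + i, c) * (al' c * a' j + be' c * b' j))"
      using albe' ij by (intro sum.cong) auto
    also have "\<dots> = (\<Sum>c\<in>{k-1..<n}. Q $$ (k + i, c) * al' c) * a' j
                  + (\<Sum>c\<in>{k-1..<n}. Q $$ (k + i, c) * be' c) * b' j"
    proof -
      have "(\<Sum>c\<in>{k-1..<n}. Q $$ (k + i, c) * (al' c * a' j + be' c * b' j))
          = (\<Sum>c\<in>{k-1..<n}. (Q $$ (k + i, c) * al' c) * a' j + (Q $$ (k + i, c) * be' c) * b' j)"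
        by (intro sum.cong refl) (simp add: algebra_simps)
      also have "\<dots> = (\<Sum>c\<in>{k-1..<n}. Q $$ (k + i, c) * al' c) * a' j
                  + (\<Sum>c\<in>{k-1..<n}. Q $$ (k + i, c) * be' c) * b' j"
        by (simp only: sum.distrib sum_distrib_right)
      finally show ?thesis .
    qed
    finally show "submatrix M {k..<n} {..<k} $$ (i, j) = (\<Sum>c\<in>{k-1..<n}. Q $$ (k + i, c) * al' c) * a' j
                  + (\<Sum>c\<in>{k-1..<n}. Q $$ (k + i, c) * be' c) * b' j" .
  qed
  show "let Q1 = mat n n (\<lambda>(i, j). Q $$ (i, j));
         Q2 = mat n n (\<lambda>(i, j). Q $$ (n + i, j));
         M = Q1 * transpose_mat Q2
     in vec_space.rank k (submatrix M {..<k} {k..<n}) \<le> 2 \<and>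
        vec_space.rank (n - k) (submatrix M {k..<n} {..<k}) \<le> 2"
    using B1 B2 unfolding Let_def M_def Q1_def Q2_def by simp
qed


end
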